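(* Let $q$ be a prime power and let $\mathcal W(5,q)$ be the symplectic polar space of ${\rm PG}(5,q)$ defined by the alternating form with Gram matrix $\begin{pmatrix} 0_3 & I_3\\ -I_3 & 0_3\end{pmatrix}$. Let $\Pi_1=\langle U_4,U_5,U_6\rangle$, $\Pi_2=\langle U_1,U_2,U_3\rangle$, and let $\Pi_3$ be a plane of $\mathcal W(5,q)$ (a generator) disjoint from both $\Pi_1$ and $\Pi_2$. Then all $q+1$ planes of the Segre variety $\Sigma_{1,2}$ of ${\rm PG}(5,q)$ determined by $\Pi_1,\Pi_2,\Pi_3$ are generators of $\mathcal W(5,q)$.
   Context: $U_i$ is the point with $1$ in position $i$ and $0$ elsewhere. The Segre variety $\Sigma_{1,2}\subset{\rm PG}(5,q)$ is the image of ${\rm PG}(1,q)\times{\rm PG}(2,q)$ under $((x_1,x_2),(y_1,y_2,y_3))\mapsto(x_iy_j)$; it contains a ruling of $q+1$ pairwise disjoint planes, and three mutually disjoint planes of ${\rm PG}(5,q)$ lie in the plane ruling of a unique such Segre variety, which is the one "determined" by them; the "$q+1$ planes of $\Sigma_{1,2}$" are the planes of this ruling. *)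

theory Defs
  imports Main
begin

text \<open>Vectors of the underlying vector space F^6 of PG(5,q), F = GF(q), are modelled
as functions nat => F vanishing from index 6 on; coordinate i-1 is the paper's i-th
coordinate (so U_i corresponds to index i-1).  Projective subspaces are modelled by
the corresponding vector subspaces.\<close>

definition vecs :: "nat \<Rightarrow> (nat \<Rightarrow> 'a::zero) set" where
  "vecs n = {v. \<forall>i\<ge>n. v i = 0}"

definition lin3 :: "'a::comm_ring_1 \<Rightarrow> 'a \<Rightarrow> 'a \<Rightarrow> (nat \<Rightarrow> 'a) \<Rightarrow> (nat \<Rightarrow> 'a) \<Rightarrow> (nat \<Rightarrow> 'a) \<Rightarrow> (nat \<Rightarrow> 'a)" where
  "lin3 a b c u v w = (\<lambda>i. a * u i + b * v i + c * w i)"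

definition is_plane :: "(nat \<Rightarrow> 'a::field) set \<Rightarrow> bool" where
  "is_plane P \<longleftrightarrow> (\<exists>u v w. u \<in> vecs 6 \<and> v \<in> vecs 6 \<and> w \<in> vecs 6 \<and>
      (\<forall>a b c. lin3 a b c u v w = (\<lambda>_. 0) \<longrightarrow> a = 0 \<and> b = 0 \<and> c = 0) \<and>
      P = {lin3 a b c u v w | a b c. True})"

definition disjoint_sub :: "(nat \<Rightarrow> 'a::zero) set \<Rightarrow> (nat \<Rightarrow> 'a) set \<Rightarrow> bool" where
  "disjoint_sub P Q \<longleftrightarrow> P \<inter> Q = {\<lambda>_. 0}"

definition symp :: "(nat \<Rightarrow> 'a::comm_ring_1) \<Rightarrow> (nat \<Rightarrow> 'a) \<Rightarrow> 'a" where
  "symp x y = (\<Sum>i<3. x i * y (i + 3) - x (i + 3) * y i)"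

definition W5_generator :: "(nat \<Rightarrow> 'a::field) set \<Rightarrow> bool" where
  "W5_generator P \<longleftrightarrow> is_plane P \<and> (\<forall>x\<in>P. \<forall>y\<in>P. symp x y = 0)"

definition mat_app :: "(nat \<Rightarrow> nat \<Rightarrow> 'a::comm_ring_1) \<Rightarrow> (nat \<Rightarrow> 'a) \<Rightarrow> (nat \<Rightarrow> 'a)" where
  "mat_app M v = (\<lambda>i. if i < 6 then (\<Sum>j<6. M i j * v j) else 0)"

definition nonsingular :: "(nat \<Rightarrow> nat \<Rightarrow> 'a::comm_ring_1) \<Rightarrow> bool" where
  "nonsingular M \<longleftrightarrow> inj_on (mat_app M) (vecs 6)"

text \<open>Segre embedding of PG(1,q) x PG(2,q):
  ((x1,x2),(y1,y2,y3)) |-> (x1y1,x1y2,x1y3,x2y1,x2y2,x2y3).\<close>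
definition segre_vec :: "'a::comm_ring_1 \<Rightarrow> 'a \<Rightarrow> (nat \<Rightarrow> 'a) \<Rightarrow> (nat \<Rightarrow> 'a)" where
  "segre_vec x1 x2 y = (\<lambda>i. if i < 3 then x1 * y i else if i < 6 then x2 * y (i - 3) else 0)"

text \<open>Plane ruling of the Segre variety Sigma_{1,2} obtained as the image of the
standard one under the collineation induced by a nonsingular matrix M: the planes
image of {(x1,x2)} x PG(2,q).\<close>
definition segre_planes :: "(nat \<Rightarrow> nat \<Rightarrow> 'a::field) \<Rightarrow> (nat \<Rightarrow> 'a) set set" where
  "segre_planes M = {{mat_app M (segre_vec x1 x2 y) | y. y \<in> vecs 3} | x1 x2. (x1, x2) \<noteq> (0, 0)}"

end

theory Submission
  imports Defs
begin

lemma symp_bilin: "symp (\<lambda>i. a*x i + b*y i) (\<lambda>i. c*z i + d*w i :: 'a::comm_ring_1) = a*c*symp x z + a*d*symp x w + b*c*symp y z + b*d*symp y w"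
  by (simp add: symp_def eval_nat_numeral algebra_simps)

lemma quad_id: fixes \<beta> :: "'a::field"
  shows "(a1*b2-a2*b1)^2 * (\<beta>*c1*c1+\<mu>*c1*c2+\<gamma>*c2*c2) = (c1*b2 - c2*b1)^2*(\<beta>*a1*a1+\<mu>*a1*a2+\<gamma>*a2*a2) + (c1*b2 - c2*b1)*(a1*c2-a2*c1)*(2*\<beta>*a1*b1 + \<mu>*(a1*b2+a2*b1) + 2*\<gamma>*a2*b2) + (a1*c2-a2*c1)^2*(\<beta>*b1*b1+\<mu>*b1*b2+\<gamma>*b2*b2)"
  by algebra

lemma quad_zero:
  fixes \<beta> \<mu> \<gamma> a1 a2 b1 b2 c1 c2 d1 d2 :: "'a::field"
  assumes "\<beta>*a1*a1+\<mu>*a1*a2+\<gamma>*a2*a2 = 0" "\<beta>*b1*b1+\<mu>*b1*b2+\<gamma>*b2*b2 = 0" "\<beta>*c1*c1+\<mu>*c1*c2+\<gamma>*c2*c2 = 0"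
    and "a1*b2-a2*b1 \<noteq> 0" "c1*b2 - c2*b1 \<noteq> 0" "a1*c2-a2*c1 \<noteq> 0"
  shows "\<beta>*d1*d1+\<mu>*d1*d2+\<gamma>*d2*d2 = 0"
proof -
  let ?R = "2*\<beta>*a1*b1 + \<mu>*(a1*b2+a2*b1) + 2*\<gamma>*a2*b2"
  have "(a1*b2-a2*b1)^2 * (\<beta>*c1*c1+\<mu>*c1*c2+\<gamma>*c2*c2) = (c1*b2 - c2*b1)*(a1*c2-a2*c1)*?R"
    using quad_id[of a1 b2 a2 b1 \<beta> c1 \<mu> c2 \<gamma>] assms(1,2) by simp
  hence "?R = 0" using assms(3-) by simp
  moreover have "(a1*b2-a2*b1)^2 * (\<beta>*d1*d1+\<mu>*d1*d2+\<gamma>*d2*d2) = (d1*b2 - d2*b1)^2*(\<beta>*a1*a1+\<mu>*a1*a2+\<gamma>*a2*a2) + (d1*b2 - d2*b1)*(a1*d2-a2*d1)*?R + (a1*d2-a2*d1)^2*(\<beta>*b1*b1+\<mu>*b1*b2+\<gamma>*b2*b2)"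
    using quad_id[of a1 b2 a2 b1 \<beta> d1 \<mu> d2 \<gamma>] by simp
  ultimately show ?thesis using assms(1,2,4) by simp
qed

lemma linear_mat: "mat_app M (\<lambda>i. a * x i + b * y i) = (\<lambda>i. a * mat_app M x i + b * mat_app M y i)"
  by (rule ext) (simp add: mat_app_def sum.distrib sum_distrib_left algebra_simps)

lemma lin3_mat: "mat_app M (lin3 a b c x y z) = lin3 a b c (mat_app M x) (mat_app M y) (mat_app M z)"
  by (rule ext) (simp add: mat_app_def lin3_def sum.distrib sum_distrib_left algebra_simps)

lemma lin3_segre: "segre_vec d1 d2 (lin3 a b c x y z) = lin3 a b c (segre_vec d1 d2 x) (segre_vec d1 d2 y) (segre_vec d1 d2 z)"
  by (rule ext) (simp add: segre_vec_def lin3_def algebra_simps)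

lemma segre_lin: "segre_vec d1 d2 y = (\<lambda>i. d1 * segre_vec 1 0 y i + d2 * segre_vec 0 1 y i)"
  by (rule ext) (simp add: segre_vec_def)

definition pl :: "(nat \<Rightarrow> nat \<Rightarrow> 'a::field) \<Rightarrow> 'a \<Rightarrow> 'a \<Rightarrow> (nat \<Rightarrow> 'a) set" where
  "pl M d1 d2 = {mat_app M (segre_vec d1 d2 y) | y. y \<in> vecs 3}"

lemma segre_planes_pl: "segre_planes M = {pl M x1 x2 | x1 x2. (x1, x2) \<noteq> (0, 0)}"
  by (simp add: segre_planes_def pl_def)

lemma pl_scale:
  assumes "(k::'a::field) \<noteq> 0"
  shows "pl M (k*b1) (k*b2) = pl M b1 b2"
proof
  show "pl M (k*b1) (k*b2) \<subseteq> pl M b1 b2"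
  proof
    fix x assume "x \<in> pl M (k*b1) (k*b2)"
    then obtain y where y: "y \<in> vecs 3" "x = mat_app M (segre_vec (k*b1) (k*b2) y)" by (auto simp: pl_def)
    have "segre_vec (k*b1) (k*b2) y = segre_vec b1 b2 (\<lambda>i. k * y i)"
      by (rule ext) (simp add: segre_vec_def)
    moreover have "(\<lambda>i. k * y i) \<in> vecs 3" using y by (simp add: vecs_def)
    ultimately show "x \<in> pl M b1 b2" using y unfolding pl_def by auto
  qed
next
  show "pl M b1 b2 \<subseteq> pl M (k*b1) (k*b2)"
  proof
    fix x assume "x \<in> pl M b1 b2"
    then obtain y where y: "y \<in> vecs 3" "x = mat_app M (segre_vec b1 b2 y)" by (auto simp: pl_def)
    have "segre_vec b1 b2 y = segre_vec (k*b1) (k*b2) (\<lambda>i. y i / k)"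
      by (rule ext) (simp add: segre_vec_def assms)
    moreover have "(\<lambda>i. y i / k) \<in> vecs 3" using y by (simp add: vecs_def)
    ultimately show "x \<in> pl M (k*b1) (k*b2)" using y unfolding pl_def by auto
  qed
qed

lemma pl_prop:
  fixes a1 :: "'a::field"
  assumes "(a1,a2) \<noteq> (0,0)" "(b1,b2) \<noteq> (0,0)" "a1*b2 = a2*b1"
  shows "pl M a1 a2 = pl M b1 b2"
proof -
  obtain k where k: "k \<noteq> 0" "a1 = k*b1" "a2 = k*b2"
  proof (cases "b1 = 0")
    case True
    then have "b2 \<noteq> 0" using assms by auto
    then show ?thesis using that[of "a2/b2"] assms True by auto
  next
    case False
    have "a2 = a1/b1 * b2" using assms False by (simp add: field_simps)
    moreover have "a1 \<noteq> 0" using assms False by auto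
    ultimately show ?thesis using that[of "a1/b1"] assms False by auto
  qed
  then show ?thesis using pl_scale by simp
qed

lemma Qexp:
  "symp (mat_app M (segre_vec d1 d2 y)) (mat_app M (segre_vec d1 d2 z)) =
    d1*d1*symp (mat_app M (segre_vec 1 0 y)) (mat_app M (segre_vec 1 0 z))
  + d1*d2*(symp (mat_app M (segre_vec 1 0 y)) (mat_app M (segre_vec 0 1 z)) + symp (mat_app M (segre_vec 0 1 y)) (mat_app M (segre_vec 1 0 z)))
  + d2*d2*symp (mat_app M (segre_vec 0 1 y)) (mat_app M (segre_vec 0 1 z))"
proof -
  have e: "\<And>y. mat_app M (segre_vec d1 d2 y) = (\<lambda>i. d1 * mat_app M (segre_vec 1 0 y) i + d2 * mat_app M (segre_vec 0 1 y) i)"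
    by (subst segre_lin) (rule linear_mat)
  show ?thesis unfolding e symp_bilin by (simp add: algebra_simps)
qed

definition ev :: "nat \<Rightarrow> nat \<Rightarrow> 'a::field" where "ev k = (\<lambda>i. if i = k then 1 else 0)"

lemma ev_vecs: "k < 3 \<Longrightarrow> ev k \<in> vecs 3" by (simp add: ev_def vecs_def)

lemma vecs3_decomp: "y \<in> vecs 3 \<Longrightarrow> y = lin3 (y 0) (y 1) (y 2) (ev 0) (ev 1) (ev 2)"
proof (rule ext)
  fix i assume "y \<in> vecs 3"
  then show "y i = lin3 (y 0) (y 1) (y 2) (ev 0) (ev 1) (ev 2) i"
    by (cases "i < 3") (auto simp: lin3_def ev_def vecs_def less_Suc_eq numeral_eq_Suc)
qed

lemma lin3_vecs: "x \<in> vecs n \<Longrightarrow> y \<in> vecs n \<Longrightarrow> z \<in> vecs n \<Longrightarrow> lin3 a b c x y z \<in> vecs n"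
  by (simp add: lin3_def vecs_def)

lemma mat_vecs: "mat_app M x \<in> vecs 6" by (simp add: mat_app_def vecs_def)
lemma segre_vecs: "segre_vec d1 d2 x \<in> vecs 6" by (simp add: segre_vec_def vecs_def)
lemma mat_zero: "mat_app M (\<lambda>_. 0) = (\<lambda>_. 0)" by (rule ext) (simp add: mat_app_def)

lemma pl_plane:
  fixes M :: "nat \<Rightarrow> nat \<Rightarrow> 'a::field"
  assumes ns: "nonsingular M" and d: "(d1,d2) \<noteq> (0,0)"
  shows "is_plane (pl M d1 d2)"
  unfolding is_plane_def
proof (intro exI conjI allI impI)
  let ?f = "\<lambda>y. mat_app M (segre_vec d1 d2 y)"
  show "?f (ev 0) \<in> vecs 6" "?f (ev 1) \<in> vecs 6" "?f (ev 2) \<in> vecs 6" by (rule mat_vecs)+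
  have L: "\<And>a b c. lin3 a b c (?f (ev 0)) (?f (ev 1)) (?f (ev 2)) = ?f (lin3 a b c (ev 0) (ev 1) (ev 2))"
    by (simp add: lin3_mat lin3_segre)
  fix a b c
  assume "lin3 a b c (?f (ev 0)) (?f (ev 1)) (?f (ev 2)) = (\<lambda>_. 0)"
  then have "mat_app M (segre_vec d1 d2 (lin3 a b c (ev 0) (ev 1) (ev 2))) = mat_app M (\<lambda>_. 0)"
    using L[of a b c] mat_zero[of M] by simp
  moreover have "(\<lambda>_. 0) \<in> vecs 6" by (simp add: vecs_def)
  ultimately have z: "segre_vec d1 d2 (lin3 a b c (ev 0) (ev 1) (ev 2)) = (\<lambda>_. 0)"
    using ns segre_vecs unfolding nonsingular_def inj_on_def by blast
  have "\<And>i. segre_vec d1 d2 (lin3 a b c (ev 0) (ev 1) (ev 2)) i = 0" using z by simp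
  from this[of 0] this[of 1] this[of 2] this[of 3] this[of 4] this[of 5]
  have "d1*a = 0" "d1*b = 0" "d1*c=0" "d2*a=0" "d2*b=0" "d2*c=0"
    by (simp_all add: segre_vec_def lin3_def ev_def)
  then show "a = 0" "b = 0" "c = 0" using d by auto
next
  let ?f = "\<lambda>y. mat_app M (segre_vec d1 d2 y)"
  have L: "\<And>a b c. lin3 a b c (?f (ev 0)) (?f (ev 1)) (?f (ev 2)) = ?f (lin3 a b c (ev 0) (ev 1) (ev 2))"
    by (simp add: lin3_mat lin3_segre)
  show "pl M d1 d2 = {lin3 a b c (?f (ev 0)) (?f (ev 1)) (?f (ev 2)) | a b c. True}"
  proof (intro equalityI subsetI)
    fix x assume "x \<in> pl M d1 d2"
    then obtain y where y: "y \<in> vecs 3" "x = ?f y" by (auto simp: pl_def)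
    then have "x = lin3 (y 0) (y 1) (y 2) (?f (ev 0)) (?f (ev 1)) (?f (ev 2))"
      using L vecs3_decomp by metis
    then show "x \<in> {lin3 a b c (?f (ev 0)) (?f (ev 1)) (?f (ev 2)) | a b c. True}" by blast
  next
    fix x assume "x \<in> {lin3 a b c (?f (ev 0)) (?f (ev 1)) (?f (ev 2)) | a b c. True}"
    then obtain a b c where "x = ?f (lin3 a b c (ev 0) (ev 1) (ev 2))" using L by auto
    moreover have "lin3 a b c (ev 0) (ev 1) (ev 2) \<in> vecs 3" by (intro lin3_vecs ev_vecs) auto
    ultimately show "x \<in> pl M d1 d2" by (auto simp: pl_def)
  qed
qed

lemma part2:
  fixes M :: "nat \<Rightarrow> nat \<Rightarrow> 'a::field"
  assumes ns: "nonsingular M"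
  and A: "A \<in> segre_planes M" and B: "B \<in> segre_planes M" and C: "C \<in> segre_planes M"
  and isoA: "\<And>x y. x \<in> A \<Longrightarrow> y \<in> A \<Longrightarrow> symp x y = 0"
  and isoB: "\<And>x y. x \<in> B \<Longrightarrow> y \<in> B \<Longrightarrow> symp x y = 0"
  and isoC: "\<And>x y. x \<in> C \<Longrightarrow> y \<in> C \<Longrightarrow> symp x y = 0"
  and ne: "A \<noteq> B" "A \<noteq> C" "B \<noteq> C"
  and P: "P \<in> segre_planes M"
  shows "W5_generator P"
proof -
  obtain a1 a2 where a: "(a1,a2) \<noteq> (0,0)" "A = pl M a1 a2" using A by (auto simp: segre_planes_pl)
  obtain b1 b2 where b: "(b1,b2) \<noteq> (0,0)" "B = pl M b1 b2" using B by (auto simp: segre_planes_pl)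
  obtain c1 c2 where c: "(c1,c2) \<noteq> (0,0)" "C = pl M c1 c2" using C by (auto simp: segre_planes_pl)
  obtain d1 d2 where d: "(d1,d2) \<noteq> (0,0)" "P = pl M d1 d2" using P by (auto simp: segre_planes_pl)
  have ab: "a1*b2 - a2*b1 \<noteq> 0" using pl_prop[OF a(1) b(1), of M] a b ne by auto
  have cb: "c1*b2 - c2*b1 \<noteq> 0" using pl_prop[OF c(1) b(1), of M] c b ne by auto
  have ac: "a1*c2 - a2*c1 \<noteq> 0" using pl_prop[OF a(1) c(1), of M] a c ne by auto
  have iso: "symp x y = 0" if xP: "x \<in> P" and yP: "y \<in> P" for x y
  proof -
    obtain yv where yv: "yv \<in> vecs 3" "x = mat_app M (segre_vec d1 d2 yv)" using xP d by (auto simp: pl_def)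
    obtain zv where zv: "zv \<in> vecs 3" "y = mat_app M (segre_vec d1 d2 zv)" using yP d by (auto simp: pl_def)
    define \<beta> where "\<beta> = symp (mat_app M (segre_vec 1 0 yv)) (mat_app M (segre_vec 1 0 zv))"
    define \<mu> where "\<mu> = symp (mat_app M (segre_vec 1 0 yv)) (mat_app M (segre_vec 0 1 zv)) + symp (mat_app M (segre_vec 0 1 yv)) (mat_app M (segre_vec 1 0 zv))"
    define \<gamma> where "\<gamma> = symp (mat_app M (segre_vec 0 1 yv)) (mat_app M (segre_vec 0 1 zv))"
    have Q: "symp (mat_app M (segre_vec e1 e2 yv)) (mat_app M (segre_vec e1 e2 zv)) = \<beta>*e1*e1+\<mu>*e1*e2+\<gamma>*e2*e2" for e1 e2
      unfolding \<beta>_def \<mu>_def \<gamma>_def by (subst Qexp) (simp add: algebra_simps)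
    have "\<beta>*a1*a1+\<mu>*a1*a2+\<gamma>*a2*a2 = 0"
      proof -
      have "mat_app M (segre_vec a1 a2 yv) \<in> A" "mat_app M (segre_vec a1 a2 zv) \<in> A"
        using a(2) yv(1) zv(1) unfolding pl_def by blast+
      then show ?thesis using isoA Q[of a1 a2] by metis
    qed
    moreover have "\<beta>*b1*b1+\<mu>*b1*b2+\<gamma>*b2*b2 = 0"
      proof -
      have "mat_app M (segre_vec b1 b2 yv) \<in> B" "mat_app M (segre_vec b1 b2 zv) \<in> B"
        using b(2) yv(1) zv(1) unfolding pl_def by blast+
      then show ?thesis using isoB Q[of b1 b2] by metis
    qed
    moreover have "\<beta>*c1*c1+\<mu>*c1*c2+\<gamma>*c2*c2 = 0"
      proof -
      have "mat_app M (segre_vec c1 c2 yv) \<in> C" "mat_app M (segre_vec c1 c2 zv) \<in> C"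
        using c(2) yv(1) zv(1) unfolding pl_def by blast+
      then show ?thesis using isoC Q[of c1 c2] by metis
    qed
    ultimately have "\<beta>*d1*d1+\<mu>*d1*d2+\<gamma>*d2*d2 = 0"
      using quad_zero[of \<beta> a1 \<mu> a2 \<gamma> b1 b2 c1 c2 d1 d2] ab cb ac by blast
    then show ?thesis using Q[of d1 d2] yv zv by simp
  qed
  show ?thesis unfolding W5_generator_def using pl_plane[OF ns d(1)] d(2) iso by blast
qed



lemma finite_vecs3: "finite (vecs 3 :: (nat \<Rightarrow> 'a::{finite,zero}) set)"
proof -
  let ?g = "\<lambda>(a::'a,b::'a,c::'a). (\<lambda>i::nat. if i = 0 then a else if i = 1 then b else if i = 2 then c else 0)"
  have "vecs 3 \<subseteq> ?g ` UNIV"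
  proof
    fix y :: "nat \<Rightarrow> 'a" assume y: "y \<in> vecs 3"
    have "y = ?g (y 0, y 1, y 2)"
    proof (rule ext)
      fix i show "y i = ?g (y 0, y 1, y 2) i"
        using y by (cases "i < 3") (auto simp: vecs_def less_Suc_eq numeral_eq_Suc)
    qed
    then show "y \<in> ?g ` UNIV" by blast
  qed
  then show ?thesis by (rule finite_subset) simp
qed

lemma part1:
  fixes u v w :: "nat \<Rightarrow> 'a::{finite,field}"
  assumes uvw: "u \<in> vecs 6" "v \<in> vecs 6" "w \<in> vecs 6"
  and top: "\<And>a b c. (\<And>i. i<3 \<Longrightarrow> lin3 a b c u v w i = 0) \<Longrightarrow> a=0 \<and> b=0 \<and> c=0"
  and bot: "\<And>a b c. (\<And>i. 3\<le>i \<Longrightarrow> i<6 \<Longrightarrow> lin3 a b c u v w i = 0) \<Longrightarrow> a=0 \<and> b=0 \<and> c=0"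
  shows "\<exists>M. nonsingular M \<and> pl M 1 1 = {lin3 a b c u v w | a b c. True}
     \<and> pl M 1 0 = {v \<in> vecs 6. v 3 = 0 \<and> v 4 = 0 \<and> v 5 = 0}
     \<and> pl M 0 1 = {v \<in> vecs 6. v 0 = 0 \<and> v 1 = 0 \<and> v 2 = 0}"
proof -
  define M :: "nat \<Rightarrow> nat \<Rightarrow> 'a" where "M = (\<lambda>i j. if (i<3 \<longleftrightarrow> j<3) then (if j mod 3 = 0 then u i else if j mod 3 = 1 then v i else w i) else 0)"
  have MA: "mat_app M x i = (if i<3 then u i * x 0 + v i * x 1 + w i * x 2 else if i<6 then u i * x 3 + v i * x 4 + w i * x 5 else 0)" for x i
  proof -
    have sum6: "(\<Sum>j<6. f j) = f 0 + f 1 + f 2 + f 3 + f 4 + f (5::nat)" for f :: "nat \<Rightarrow> 'a"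
      by (simp add: eval_nat_numeral)
    show ?thesis by (simp add: mat_app_def sum6 M_def)
  qed
  have u6: "\<And>i. 6 \<le> i \<Longrightarrow> u i = 0" "\<And>i. 6 \<le> i \<Longrightarrow> v i = 0" "\<And>i. 6 \<le> i \<Longrightarrow> w i = 0"
    using uvw by (auto simp: vecs_def)
  define T where "T = (\<lambda>a b c. (\<lambda>i::nat. if i = 0 then a else if i = 1 then b else if i = 2 then (c::'a) else 0))"
  have T3: "T a b c \<in> vecs 3" for a b c by (simp add: T_def vecs_def)
  have S11: "mat_app M (segre_vec 1 1 y) = lin3 (y 0) (y 1) (y 2) u v w" for y
  proof (rule ext)
    fix i show "mat_app M (segre_vec 1 1 y) i = lin3 (y 0) (y 1) (y 2) u v w i"
      using u6[of i] by (cases "i < 6") (auto simp: MA segre_vec_def lin3_def)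
  qed
  have S10: "mat_app M (segre_vec 1 0 y) = (\<lambda>i. if i<3 then lin3 (y 0) (y 1) (y 2) u v w i else 0)" for y
    by (rule ext) (auto simp: MA segre_vec_def lin3_def)
  have S01: "mat_app M (segre_vec 0 1 y) = (\<lambda>i. if i<3 then 0 else if i < 6 then lin3 (y 0) (y 1) (y 2) u v w i else 0)" for y
    by (rule ext) (auto simp: MA segre_vec_def lin3_def)
  have lin3diff: "lin3 (a-a') (b-b') (c-c') u v w i = lin3 a b c u v w i - lin3 a' b' c' u v w i" for a b c a' b' c' i
    by (simp add: lin3_def algebra_simps)
  have eq3: "y = y'" if "y \<in> vecs 3" "y' \<in> vecs 3" "y 0 = y' 0" "y 1 = y' 1" "y 2 = y' 2" for y y' :: "nat \<Rightarrow> 'a"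
  proof (rule ext)
    fix i show "y i = y' i" using that by (cases "i < 3") (auto simp: vecs_def less_Suc_eq numeral_eq_Suc)
  qed
  have P11: "pl M 1 1 = {lin3 a b c u v w | a b c. True}"
  proof (intro equalityI subsetI)
    fix x assume "x \<in> pl M 1 1" then show "x \<in> {lin3 a b c u v w | a b c. True}"
      by (auto simp: pl_def S11)
  next
    fix x assume "x \<in> {lin3 a b c u v w | a b c. True}"
    then obtain a b c where "x = lin3 a b c u v w" by blast
    then have "x = mat_app M (segre_vec 1 1 (T a b c))" by (simp add: S11 T_def)
    then show "x \<in> pl M 1 1" using T3 by (auto simp: pl_def)
  qed
  define F where "F = (\<lambda>y::nat\<Rightarrow>'a. (\<lambda>i. if i<3 then lin3 (y 0) (y 1) (y 2) u v w i else 0))"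
  have Fv: "F ` vecs 3 \<subseteq> vecs 3" by (auto simp: F_def vecs_def)
  have Fi: "inj_on F (vecs 3)"
  proof (rule inj_onI)
    fix y y' assume y: "y \<in> vecs 3" "y' \<in> vecs 3" "F y = F y'"
    have "\<And>i. i < 3 \<Longrightarrow> lin3 (y 0 - y' 0) (y 1 - y' 1) (y 2 - y' 2) u v w i = 0"
      using y(3) unfolding lin3diff by (metis F_def right_minus_eq)
    then have "y 0 - y' 0 = 0 \<and> y 1 - y' 1 = 0 \<and> y 2 - y' 2 = 0" by (rule top)
    then show "y = y'" using eq3 y by simp
  qed
  have Fs: "F ` vecs 3 = vecs 3" using endo_inj_surj[OF finite_vecs3 Fv Fi] .
  have P10: "pl M 1 0 = {v \<in> vecs 6. v 3 = 0 \<and> v 4 = 0 \<and> v 5 = 0}"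
  proof (intro equalityI subsetI)
    fix x assume "x \<in> pl M 1 0" then show "x \<in> {v \<in> vecs 6. v 3 = 0 \<and> v 4 = 0 \<and> v 5 = 0}"
      by (auto simp: pl_def S10 vecs_def)
  next
    fix x :: "nat \<Rightarrow> 'a" assume x: "x \<in> {v \<in> vecs 6. v 3 = 0 \<and> v 4 = 0 \<and> v 5 = 0}"
    have "x \<in> vecs 3"
      unfolding vecs_def
    proof (intro CollectI allI impI)
      fix i :: nat assume i: "3 \<le> i"
      show "x i = 0"
      proof (cases "i < 6")
        case True then have "i = 3 \<or> i = 4 \<or> i = 5" using i by auto
        then show ?thesis using x by auto
      next
        case False then show ?thesis using x by (auto simp: vecs_def)
      qed
    qed
    then obtain y where y: "y \<in> vecs 3" "x = F y" using Fs by blast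
    then have "x = mat_app M (segre_vec 1 0 y)" by (simp add: S10 F_def)
    then show "x \<in> pl M 1 0" using y by (auto simp: pl_def)
  qed
  define G where "G = (\<lambda>y::nat\<Rightarrow>'a. (\<lambda>i. if i<3 then lin3 (y 0) (y 1) (y 2) u v w (i+3) else 0))"
  have Gv: "G ` vecs 3 \<subseteq> vecs 3" by (auto simp: G_def vecs_def)
  have Gi: "inj_on G (vecs 3)"
  proof (rule inj_onI)
    fix y y' assume y: "y \<in> vecs 3" "y' \<in> vecs 3" "G y = G y'"
    have "lin3 (y 0 - y' 0) (y 1 - y' 1) (y 2 - y' 2) u v w i = 0" if "3 \<le> i" "i < 6" for i
    proof -
      have "G y (i-3) = G y' (i-3)" using y(3) by simp
      moreover have e: "i - 3 + 3 = i" "i - 3 < 3" using that by auto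
      ultimately show ?thesis unfolding lin3diff G_def by (simp only: e if_True) simp
    qed
    then have "y 0 - y' 0 = 0 \<and> y 1 - y' 1 = 0 \<and> y 2 - y' 2 = 0" by (rule bot)
    then show "y = y'" using eq3 y by simp
  qed
  have Gs: "G ` vecs 3 = vecs 3" using endo_inj_surj[OF finite_vecs3 Gv Gi] .
  have P01: "pl M 0 1 = {v \<in> vecs 6. v 0 = 0 \<and> v 1 = 0 \<and> v 2 = 0}"
  proof (intro equalityI subsetI)
    fix x assume "x \<in> pl M 0 1" then show "x \<in> {v \<in> vecs 6. v 0 = 0 \<and> v 1 = 0 \<and> v 2 = 0}"
      by (auto simp: pl_def S01 vecs_def)
  next
    fix x :: "nat \<Rightarrow> 'a" assume x: "x \<in> {v \<in> vecs 6. v 0 = 0 \<and> v 1 = 0 \<and> v 2 = 0}"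
    define x' where "x' = (\<lambda>i. if i < 3 then x (i+3) else 0)"
    have "x' \<in> vecs 3" by (simp add: x'_def vecs_def)
    then obtain y where y: "y \<in> vecs 3" "x' = G y" using Gs by blast
    have "mat_app M (segre_vec 0 1 y) = x"
    proof (rule ext)
      fix i
      show "mat_app M (segre_vec 0 1 y) i = x i"
      proof (cases "i < 3")
        case True then have "i = 0 \<or> i = 1 \<or> i = 2" by auto
        then show ?thesis using x True by (auto simp: S01)
      next
        case False
        show ?thesis
        proof (cases "i < 6")
          case True
          have "x' (i-3) = G y (i-3)" using y by simp
          moreover have e: "i - 3 + 3 = i" "i - 3 < 3" using True False by auto
          ultimately have "x i = lin3 (y 0) (y 1) (y 2) u v w i" unfolding x'_def G_def by (simp only: e if_True)
          then show ?thesis using True False by (simp add: S01)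
        next
          case F6: False
          then show ?thesis using x False by (auto simp: S01 vecs_def)
        qed
      qed
    qed
    then show "x \<in> pl M 0 1" using y by (auto simp: pl_def)
  qed
  have NS: "nonsingular M"
    unfolding nonsingular_def
  proof (rule inj_onI)
    fix x x' :: "nat \<Rightarrow> 'a" assume xx: "x \<in> vecs 6" "x' \<in> vecs 6" "mat_app M x = mat_app M x'"
    have "lin3 (x 0 - x' 0) (x 1 - x' 1) (x 2 - x' 2) u v w i = 0" if "i < 3" for i
    proof -
      have "mat_app M x i = mat_app M x' i" using xx by simp
      then show ?thesis using that by (simp add: MA lin3_def algebra_simps)
    qed
    then have t: "x 0 - x' 0 = 0 \<and> x 1 - x' 1 = 0 \<and> x 2 - x' 2 = 0" by (rule top)
    have "lin3 (x 3 - x' 3) (x 4 - x' 4) (x 5 - x' 5) u v w i = 0" if "3 \<le> i" "i < 6" for i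
    proof -
      have "mat_app M x i = mat_app M x' i" using xx by simp
      then show ?thesis using that by (simp add: MA lin3_def algebra_simps)
    qed
    then have b: "x 3 - x' 3 = 0 \<and> x 4 - x' 4 = 0 \<and> x 5 - x' 5 = 0" by (rule bot)
    show "x = x'"
    proof (rule ext)
      fix i show "x i = x' i"
      proof (cases "i < 6")
        case True then have "i = 0 \<or> i = 1 \<or> i = 2 \<or> i = 3 \<or> i = 4 \<or> i = 5" by auto
        then show ?thesis using t b by auto
      next
        case False then show ?thesis using xx by (auto simp: vecs_def)
      qed
    qed
  qed
  show ?thesis using NS P11 P10 P01 by blast
qed

theorem mainTheorem11:
  fixes Pi3 :: "(nat \<Rightarrow> 'a::{finite,field}) set"
  defines "Pi1 \<equiv> {v \<in> vecs 6. v 0 = 0 \<and> v 1 = 0 \<and> v 2 = 0}"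
      and "Pi2 \<equiv> {v \<in> vecs 6. v 3 = 0 \<and> v 4 = 0 \<and> v 5 = 0}"
  assumes "W5_generator Pi3"
      and "disjoint_sub Pi3 Pi1"
      and "disjoint_sub Pi3 Pi2"
  shows "(\<exists>M. nonsingular M \<and> Pi1 \<in> segre_planes M \<and> Pi2 \<in> segre_planes M
                \<and> Pi3 \<in> segre_planes M)
       \<and> (\<forall>M. nonsingular M \<and> Pi1 \<in> segre_planes M \<and> Pi2 \<in> segre_planes M
                \<and> Pi3 \<in> segre_planes M \<longrightarrow> (\<forall>P \<in> segre_planes M. W5_generator P))"
proof
  obtain u v w where uvw: "u \<in> vecs 6" "v \<in> vecs 6" "w \<in> vecs 6"
    and ind: "\<And>a b c. lin3 a b c u v w = (\<lambda>_. 0) \<Longrightarrow> a = 0 \<and> b = 0 \<and> c = 0"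
    and P3: "Pi3 = {lin3 a b c u v w | a b c. True}"
    using assms(3) unfolding W5_generator_def is_plane_def by blast
  have iso3: "\<And>x y. x \<in> Pi3 \<Longrightarrow> y \<in> Pi3 \<Longrightarrow> symp x y = 0"
    using assms(3) unfolding W5_generator_def by blast
  have dj1: "Pi3 \<inter> Pi1 = {\<lambda>_. 0}" and dj2: "Pi3 \<inter> Pi2 = {\<lambda>_. 0}"
    using assms(4,5) unfolding disjoint_sub_def by auto
  have top: "a=0 \<and> b=0 \<and> c=0" if h: "\<And>i. i<3 \<Longrightarrow> lin3 a b c u v w i = 0" for a b c
  proof -
    have "lin3 a b c u v w \<in> Pi3" using P3 by blast
    moreover have "lin3 a b c u v w \<in> Pi1"
      unfolding Pi1_def using lin3_vecs[OF uvw] h by auto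
    ultimately have "lin3 a b c u v w = (\<lambda>_. 0)" using dj1 by blast
    then show ?thesis by (rule ind)
  qed
  have bot: "a=0 \<and> b=0 \<and> c=0" if h: "\<And>i. 3 \<le> i \<Longrightarrow> i<6 \<Longrightarrow> lin3 a b c u v w i = 0" for a b c
  proof -
    have "lin3 a b c u v w \<in> Pi3" using P3 by blast
    moreover have "lin3 a b c u v w \<in> Pi2"
      unfolding Pi2_def using lin3_vecs[OF uvw] h by auto
    ultimately have "lin3 a b c u v w = (\<lambda>_. 0)" using dj2 by blast
    then show ?thesis by (rule ind)
  qed
  obtain M where M: "nonsingular M" "pl M 1 1 = Pi3" "pl M 1 0 = Pi2" "pl M 0 1 = Pi1"
    using part1[OF uvw top bot] P3 unfolding Pi1_def Pi2_def by blast
  have "pl M 1 1 \<in> segre_planes M" "pl M 1 0 \<in> segre_planes M" "pl M 0 1 \<in> segre_planes M"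
    unfolding segre_planes_pl by fastforce+
  then show "\<exists>M. nonsingular M \<and> Pi1 \<in> segre_planes M \<and> Pi2 \<in> segre_planes M
                \<and> Pi3 \<in> segre_planes M" using M by metis
next
  have e3: "(ev 3 :: nat \<Rightarrow> 'a) \<in> Pi1" "(ev 3 :: nat \<Rightarrow> 'a) \<notin> Pi2" "(ev 3 :: nat \<Rightarrow> 'a) \<noteq> (\<lambda>_. 0)"
    unfolding Pi1_def Pi2_def by (auto simp: ev_def vecs_def fun_eq_iff)
  have e0: "(ev 0 :: nat \<Rightarrow> 'a) \<in> Pi2" "(ev 0 :: nat \<Rightarrow> 'a) \<noteq> (\<lambda>_. 0)"
    unfolding Pi2_def by (auto simp: ev_def vecs_def fun_eq_iff)
  have dj1: "Pi3 \<inter> Pi1 = {\<lambda>_. 0}" and dj2: "Pi3 \<inter> Pi2 = {\<lambda>_. 0}"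
    using assms(4,5) unfolding disjoint_sub_def by auto
  have ne: "Pi1 \<noteq> Pi2" "Pi1 \<noteq> Pi3" "Pi2 \<noteq> Pi3"
    using e3 e0 dj1 dj2 by auto
  have iso3: "\<And>x y. x \<in> Pi3 \<Longrightarrow> y \<in> Pi3 \<Longrightarrow> symp x y = 0"
    using assms(3) unfolding W5_generator_def by blast
  have iso1: "\<And>x y. x \<in> Pi1 \<Longrightarrow> y \<in> Pi1 \<Longrightarrow> symp x y = 0"
    unfolding Pi1_def by (auto simp: symp_def eval_nat_numeral)
  have iso2: "\<And>x y. x \<in> Pi2 \<Longrightarrow> y \<in> Pi2 \<Longrightarrow> symp x y = 0"
    unfolding Pi2_def by (auto simp: symp_def eval_nat_numeral)
  show "\<forall>M. nonsingular M \<and> Pi1 \<in> segre_planes M \<and> Pi2 \<in> segre_planes M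
                \<and> Pi3 \<in> segre_planes M \<longrightarrow> (\<forall>P \<in> segre_planes M. W5_generator P)"
  proof (intro allI impI ballI)
    fix M P assume H: "nonsingular M \<and> Pi1 \<in> segre_planes M \<and> Pi2 \<in> segre_planes M \<and> Pi3 \<in> segre_planes M"
      and P: "P \<in> segre_planes M"
    show "W5_generator P"
      using part2[of M Pi1 Pi2 Pi3 P] H iso1 iso2 iso3 ne P by blast
  qed
qed

end
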